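(* Fix $j\in\{1,\dots,p\}$ and assume the setting in the context with: $\tilde m(\mathbf x)=\sum_{\ell=1}^p m_\ell(x^{(\ell)})$ for functions $m_\ell:[0,1]\to\mathbb R$; $\sup_{\mathbf x\in[0,1]^p}|\tilde m(\mathbf x)|\le K$ for some $K>0$; $\mathbb E[\varepsilon^4]<\infty$; and $\mathrm{Var}(m_j(X^{(j)}))>0$. Let $(\gamma_n)$ be integers with $\gamma_n\ge 2$ and $\gamma_n\to\infty$. Then there exists $\tilde\zeta>0$ such that $\gamma_n^2\,\zeta_{1,\gamma_n}\to\tilde\zeta$ as $n\to\infty$.
   Context: Setting. Let $p\ge 1$. Let $\mathbf X=(X^{(1)},\dots,X^{(p)})$ be uniformly distributed on $[0,1]^p$ (so its coordinates are mutually independent), and let $Y=\tilde m(\mathbf X)+\varepsilon$, where $\tilde m:[0,1]^p\to\mathbb R$ is measurable, $\varepsilon$ is independent of $\mathbf X$, $\mathbb E[\varepsilon]=0$ and $\mathrm{Var}(\varepsilon)=\sigma^2>0$. Let $\mathbf Z_i=(\mathbf X_i,Y_i)$, $i=1,2,\dots$, be i.i.d. copies of $(\mathbf X,Y)$, with $\varepsilon_i=Y_i-\tilde m(\mathbf X_i)$. Fix the feature index $j$. Permuted points and kernel. A derangement of a finite set $S$ is a bijection $\pi:S\to S$ with $\pi(i)\neq i$ for all $i$. For a derangement $\pi$ of an index set $S$ and $i\in S$, let $\mathbf X_i^{\pi}$ be the vector $\mathbf X_i$ with its $j$-th coordinate replaced by $X_{\pi(i)}^{(j)}$. For an integer $\gamma\ge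 2$ define the random variable $$h_\gamma=h_\gamma(\mathbf Z_1,\dots,\mathbf Z_\gamma;\pi)=\frac1\gamma\sum_{i=1}^\gamma\Big\{\big(Y_i-\tilde m(\mathbf X_i^{\pi})\big)^2-\big(Y_i-\tilde m(\mathbf X_i)\big)^2\Big\},$$ where $\pi$ is a uniformly distributed random derangement of $\{1,\dots,\gamma\}$, independent of the data. Set $\zeta_{1,\gamma}=\mathrm{Var}\big(\mathbb E[h_\gamma\mid \mathbf Z_1]\big)$ and $\zeta_\gamma=\mathrm{Var}(h_\gamma)$. *)

theory Defs
  imports "HOL-Probability.Probability"
begin

definition unif01 :: "real measure" where
  "unif01 = uniform_measure lborel {0..1}"

definition Xdist :: "nat \<Rightarrow> (nat \<Rightarrow> real) measure" where
  "Xdist p = PiM {..<p} (\<lambda>_. unif01)"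

text \<open>Distribution of one observation, represented as the pair (X, eps), with eps independent of X
  and having distribution mu; the response is Y = mtilde X + eps.\<close>
definition obs_dist :: "nat \<Rightarrow> real measure \<Rightarrow> ((nat \<Rightarrow> real) \<times> real) measure" where
  "obs_dist p \<mu> = Xdist p \<Otimes>\<^sub>M \<mu>"

definition mtilde :: "(nat \<Rightarrow> real \<Rightarrow> real) \<Rightarrow> nat \<Rightarrow> (nat \<Rightarrow> real) \<Rightarrow> real" where
  "mtilde m p x = (\<Sum>l<p. m l (x l))"

definition derangements :: "nat \<Rightarrow> (nat \<Rightarrow> nat) set" where
  "derangements n = {\<pi>. \<pi> permutes {..<n} \<and> (\<forall>i<n. \<pi> i \<noteq> i)}"

definition hker :: "(nat \<Rightarrow> real \<Rightarrow> real) \<Rightarrow> nat \<Rightarrow> nat \<Rightarrow> nat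
    \<Rightarrow> (nat \<Rightarrow> (nat \<Rightarrow> real) \<times> real) \<Rightarrow> (nat \<Rightarrow> nat) \<Rightarrow> real" where
  "hker m p j \<gamma> zs \<pi> = (1 / real \<gamma>) * (\<Sum>i<\<gamma>.
      (let x = fst (zs i); y = mtilde m p x + snd (zs i)
       in (y - mtilde m p (x(j := fst (zs (\<pi> i)) j)))\<^sup>2 - (y - mtilde m p x)\<^sup>2))"

text \<open>Average of the kernel over a uniformly random derangement (independent of the data).\<close>
definition hbar :: "(nat \<Rightarrow> real \<Rightarrow> real) \<Rightarrow> nat \<Rightarrow> nat \<Rightarrow> nat
    \<Rightarrow> (nat \<Rightarrow> (nat \<Rightarrow> real) \<times> real) \<Rightarrow> real" where
  "hbar m p j \<gamma> zs = (\<Sum>\<pi>\<in>derangements \<gamma>. hker m p j \<gamma> zs \<pi>) / real (card (derangements \<gamma>))"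

text \<open>E[h_gamma | Z_1 = z]: the first observation (index 0) is fixed to z, all other
  observations (i.i.d. with law obs_dist) and the derangement are integrated out.\<close>
definition condexp1 :: "(nat \<Rightarrow> real \<Rightarrow> real) \<Rightarrow> nat \<Rightarrow> nat \<Rightarrow> real measure \<Rightarrow> nat
    \<Rightarrow> (nat \<Rightarrow> real) \<times> real \<Rightarrow> real" where
  "condexp1 m p j \<mu> \<gamma> z =
     (\<integral>zs. hbar m p j \<gamma> (zs(0 := z)) \<partial>(PiM {..<\<gamma>} (\<lambda>_. obs_dist p \<mu>)))"

definition zeta1 :: "(nat \<Rightarrow> real \<Rightarrow> real) \<Rightarrow> nat \<Rightarrow> nat \<Rightarrow> real measure \<Rightarrow> nat \<Rightarrow> real" where
  "zeta1 m p j \<mu> \<gamma> =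
     (\<integral>z. (condexp1 m p j \<mu> \<gamma> z - (\<integral>z'. condexp1 m p j \<mu> \<gamma> z' \<partial>obs_dist p \<mu>))\<^sup>2 \<partial>obs_dist p \<mu>)"

end

theory Submission
  imports Defs
begin


lemma unif01_prob: "prob_space unif01"
  unfolding unif01_def by (intro prob_space_uniform_measure) auto

lemma sets_unif01[measurable_cong]: "sets unif01 = sets borel"
  unfolding unif01_def by simp

lemma AE_unif01: "AE t in unif01. t \<in> {0..1}"
  unfolding unif01_def by (intro AE_uniform_measureI) auto

lemma Xdist_prob: "prob_space (Xdist p)"
  unfolding Xdist_def by (intro prob_space_PiM unif01_prob)

lemma pair_int:
  fixes f :: "'a \<Rightarrow> real" and h :: "'b \<Rightarrow> real"
  assumes A: "prob_space A" and B: "prob_space B"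
    and f: "integrable A f" and h: "integrable B h"
  shows "integrable (A \<Otimes>\<^sub>M B) (\<lambda>w. f (fst w) * h (snd w))"
    and "(\<integral>w. f (fst w) * h (snd w) \<partial>(A \<Otimes>\<^sub>M B)) = (\<integral>x. f x \<partial>A) * (\<integral>y. h y \<partial>B)"
proof -
  interpret A: prob_space A by fact
  interpret B: prob_space B by fact
  interpret P: pair_sigma_finite A B by unfold_locales
  have fm[measurable]: "f \<in> borel_measurable A" using f by auto
  have hm[measurable]: "h \<in> borel_measurable B" using h by auto
  have "(\<integral>\<^sup>+ w. ennreal (norm (f (fst w) * h (snd w))) \<partial>(A \<Otimes>\<^sub>M B))
      = (\<integral>\<^sup>+ x. \<integral>\<^sup>+ y. ennreal (norm (f x)) * ennreal (norm (h y)) \<partial>B \<partial>A)"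
    by (subst B.nn_integral_fst[symmetric]) (auto simp: abs_mult ennreal_mult)
  also have "\<dots> = (\<integral>\<^sup>+ x. ennreal (norm (f x)) * (\<integral>\<^sup>+ y. ennreal (norm (h y)) \<partial>B) \<partial>A)"
    by (simp add: nn_integral_cmult)
  also have "\<dots> = (\<integral>\<^sup>+ x. ennreal (norm (f x)) \<partial>A) * (\<integral>\<^sup>+ y. ennreal (norm (h y)) \<partial>B)"
    by (simp add: nn_integral_multc)
  also have "\<dots> < \<infinity>"
    using f h by (simp add: integrable_iff_bounded ennreal_mult_less_top)
  finally show I: "integrable (A \<Otimes>\<^sub>M B) (\<lambda>w. f (fst w) * h (snd w))"
    by (simp add: integrable_iff_bounded)
  have I': "integrable (A \<Otimes>\<^sub>M B) (case_prod (\<lambda>x y. f x * h y))"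
    using I by (simp add: case_prod_beta')
  have "(\<integral>w. f (fst w) * h (snd w) \<partial>(A \<Otimes>\<^sub>M B)) = (\<integral>x. (\<integral>y. f x * h y \<partial>B) \<partial>A)"
    using P.integral_fst[OF I'] by (simp add: case_prod_beta')
  also have "\<dots> = (\<integral>x. f x * (\<integral>y. h y \<partial>B) \<partial>A)" by simp
  also have "\<dots> = (\<integral>x. f x \<partial>A) * (\<integral>y. h y \<partial>B)" by simp
  finally show "(\<integral>w. f (fst w) * h (snd w) \<partial>(A \<Otimes>\<^sub>M B)) = (\<integral>x. f x \<partial>A) * (\<integral>y. h y \<partial>B)" .
qed

lemma pi2:
  fixes F G :: "'a \<Rightarrow> real"
  assumes O: "prob_space Ob" and k: "k < (N::nat)" and i: "i < N" and ki: "k \<noteq> i"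
    and F: "integrable Ob F" and G: "integrable Ob G"
  shows "integrable (PiM {..<N} (\<lambda>_. Ob)) (\<lambda>\<omega>. F (\<omega> k) * G (\<omega> i))"
    and "(\<integral>\<omega>. F (\<omega> k) * G (\<omega> i) \<partial>PiM {..<N} (\<lambda>_. Ob)) = (\<integral>x. F x \<partial>Ob) * (\<integral>x. G x \<partial>Ob)"
proof -
  interpret O: prob_space Ob by fact
  interpret PS: product_sigma_finite "\<lambda>_. Ob" by unfold_locales
  define f where "f l = (if l = k then F else if l = i then G else (\<lambda>_. 1::real))" for l
  have fi: "\<And>l. l \<in> {..<N} \<Longrightarrow> integrable Ob (f l)" using F G by (auto simp: f_def O.prob_space)
  have eq: "(\<Prod>l\<in>{..<N}. f l (\<omega> l)) = F (\<omega> k) * G (\<omega> i)" for \<omega>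
  proof -
    have "(\<Prod>l\<in>{..<N}. f l (\<omega> l)) = (\<Prod>l\<in>{k,i}. f l (\<omega> l))"
      using k i by (intro prod.mono_neutral_right) (auto simp: f_def O.prob_space)
    also have "\<dots> = F (\<omega> k) * G (\<omega> i)" using ki by (simp add: f_def)
    finally show ?thesis .
  qed
  have eq2: "(\<Prod>l\<in>{..<N}. (\<integral>x. f l x \<partial>Ob)) = (\<integral>x. F x \<partial>Ob) * (\<integral>x. G x \<partial>Ob)"
  proof -
    have "(\<Prod>l\<in>{..<N}. (\<integral>x. f l x \<partial>Ob)) = (\<Prod>l\<in>{k,i}. (\<integral>x. f l x \<partial>Ob))"
      using k i by (intro prod.mono_neutral_right) (auto simp: f_def O.prob_space)
    also have "\<dots> = (\<integral>x. F x \<partial>Ob) * (\<integral>x. G x \<partial>Ob)" using ki by (simp add: f_def)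
    finally show ?thesis .
  qed
  show "integrable (PiM {..<N} (\<lambda>_. Ob)) (\<lambda>\<omega>. F (\<omega> k) * G (\<omega> i))"
    using PS.product_integrable_prod[of "{..<N}" f, OF _ fi] by (simp add: eq)
  show "(\<integral>\<omega>. F (\<omega> k) * G (\<omega> i) \<partial>PiM {..<N} (\<lambda>_. Ob)) = (\<integral>x. F x \<partial>Ob) * (\<integral>x. G x \<partial>Ob)"
    using PS.product_integral_prod[of "{..<N}" f, OF _ fi] by (simp add: eq eq2)
qed

lemma pi1:
  fixes F :: "'a \<Rightarrow> real"
  assumes O: "prob_space Ob" and k: "k < (N::nat)" and F: "integrable Ob F"
  shows "integrable (PiM {..<N} (\<lambda>_. Ob)) (\<lambda>\<omega>. F (\<omega> k))"
    and "(\<integral>\<omega>. F (\<omega> k) \<partial>PiM {..<N} (\<lambda>_. Ob)) = (\<integral>x. F x \<partial>Ob)"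
proof -
  interpret O: prob_space Ob by fact
  interpret PS: product_sigma_finite "\<lambda>_. Ob" by unfold_locales
  define f where "f l = (if l = k then F else (\<lambda>_. 1::real))" for l
  have fi: "\<And>l. l \<in> {..<N} \<Longrightarrow> integrable Ob (f l)" using F by (auto simp: f_def O.prob_space)
  have eq: "(\<Prod>l\<in>{..<N}. f l (\<omega> l)) = F (\<omega> k)" for \<omega>
  proof -
    have "(\<Prod>l\<in>{..<N}. f l (\<omega> l)) = (\<Prod>l\<in>{k}. f l (\<omega> l))"
      using k by (intro prod.mono_neutral_right) (auto simp: f_def O.prob_space)
    then show ?thesis by (simp add: f_def)
  qed
  have eq2: "(\<Prod>l\<in>{..<N}. (\<integral>x. f l x \<partial>Ob)) = (\<integral>x. F x \<partial>Ob)"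
  proof -
    have "(\<Prod>l\<in>{..<N}. (\<integral>x. f l x \<partial>Ob)) = (\<Prod>l\<in>{k}. (\<integral>x. f l x \<partial>Ob))"
      using k by (intro prod.mono_neutral_right) (auto simp: f_def O.prob_space)
    then show ?thesis by (simp add: f_def)
  qed
  show "integrable (PiM {..<N} (\<lambda>_. Ob)) (\<lambda>\<omega>. F (\<omega> k))"
    using PS.product_integrable_prod[of "{..<N}" f, OF _ fi] by (simp add: eq)
  show "(\<integral>\<omega>. F (\<omega> k) \<partial>PiM {..<N} (\<lambda>_. Ob)) = (\<integral>x. F x \<partial>Ob)"
    using PS.product_integral_prod[of "{..<N}" f, OF _ fi] by (simp add: eq eq2)
qed




locale S =
  fixes m :: "nat \<Rightarrow> real \<Rightarrow> real" and p j :: nat and K :: real and \<mu> :: "real measure"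
  assumes jp: "j < p"
    and mmeas: "\<And>l. l < p \<Longrightarrow> m l \<in> borel_measurable borel"
    and bnd: "\<forall>x\<in>PiE {..<p} (\<lambda>_. {0..1}). \<bar>mtilde m p x\<bar> \<le> K"
    and mu_prob: "prob_space \<mu>" and sets_mu: "sets \<mu> = sets borel"
    and int4: "integrable \<mu> (\<lambda>e. e ^ 4)"
    and mean0: "(\<integral>e. e \<partial>\<mu>) = 0"
begin

abbreviation "g \<equiv> m j"
abbreviation "Ob \<equiv> obs_dist p \<mu>"

lemma g_meas[measurable]: "g \<in> borel_measurable borel" using mmeas jp by auto

lemma mtilde_upd: "mtilde m p (x(j := t)) = mtilde m p x - m j (x j) + m j t"
proof -
  have "mtilde m p (x(j := t)) = m j t + (\<Sum>l\<in>{..<p}-{j}. m l (x l))"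
    unfolding mtilde_def using jp by (subst sum.remove[of _ j]) auto
  moreover have "mtilde m p x = m j (x j) + (\<Sum>l\<in>{..<p}-{j}. m l (x l))"
    unfolding mtilde_def using jp by (subst sum.remove[of _ j]) auto
  ultimately show ?thesis by simp
qed

lemma g_bound: "\<exists>B. \<forall>t\<in>{0..1}. \<bar>g t\<bar> \<le> B"
proof (intro exI ballI)
  fix t :: real assume t: "t \<in> {0..1}"
  define x0 where "x0 = (\<lambda>l\<in>{..<p}. (0::real))"
  have x0: "x0 \<in> PiE {..<p} (\<lambda>_. {0..1})" by (auto simp: x0_def)
  have x1: "x0(j := t) \<in> PiE {..<p} (\<lambda>_. {0..1})" using x0 t jp by (auto simp: PiE_iff extensional_def x0_def)
  have "x0 j = 0" using jp by (simp add: x0_def)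
  then have "mtilde m p (x0(j := t)) = mtilde m p x0 - g 0 + g t" by (simp add: mtilde_upd)
  moreover have "\<bar>mtilde m p x0\<bar> \<le> K" using bnd x0 by blast
  moreover have "\<bar>mtilde m p (x0(j := t))\<bar> \<le> K" using bnd x1 by blast
  ultimately show "\<bar>g t\<bar> \<le> 2 * K + \<bar>g 0\<bar>" by linarith
qed

lemma cont_bound:
  fixes \<phi> :: "real \<Rightarrow> real"
  assumes "continuous_on UNIV \<phi>"
  shows "\<exists>C. \<forall>t\<in>{0..1}. \<bar>\<phi> (g t)\<bar> \<le> C"
proof -
  obtain B where B: "\<forall>t\<in>{0..1}. \<bar>g t\<bar> \<le> B" using g_bound by blast
  have "compact (\<phi> ` {-B..B})"
    by (intro compact_continuous_image continuous_on_subset[OF assms]) auto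
  then have "bounded (\<phi> ` {-B..B})" by (rule compact_imp_bounded)
  then obtain C where C: "\<forall>y\<in>\<phi> ` {-B..B}. norm y \<le> C"
    unfolding bounded_iff by blast
  show ?thesis
  proof (intro exI ballI)
    fix t :: real assume "t \<in> {0..1}"
    then have "g t \<in> {-B..B}" using B by fastforce
    then show "\<bar>\<phi> (g t)\<bar> \<le> C" using C by auto
  qed
qed

lemma unif_int:
  fixes \<phi> :: "real \<Rightarrow> real"
  assumes "continuous_on UNIV \<phi>"
  shows "integrable unif01 (\<lambda>t. \<phi> (g t))"
proof -
  interpret U: prob_space unif01 by (rule unif01_prob)
  obtain C where C: "\<forall>t\<in>{0..1}. \<bar>\<phi> (g t)\<bar> \<le> C" using cont_bound[OF assms] by blast
  have [measurable]: "\<phi> \<in> borel_measurable borel" using assms by (rule borel_measurable_continuous_onI)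
  show ?thesis
  proof (rule U.integrable_const_bound[where B=C])
    show "AE x in unif01. norm (\<phi> (g x)) \<le> C" using AE_unif01 by eventually_elim (use C in auto)
  qed simp
qed

lemma Xdist_comp:
  fixes f :: "real \<Rightarrow> real"
  assumes f[measurable]: "f \<in> borel_measurable borel"
  shows "integrable (Xdist p) (\<lambda>x. f (x j)) \<longleftrightarrow> integrable unif01 f"
    and "(\<integral>x. f (x j) \<partial>Xdist p) = (\<integral>t. f t \<partial>unif01)"
proof -
  have D: "distr (Xdist p) unif01 (\<lambda>x. x j) = unif01"
    unfolding Xdist_def using jp by (intro distr_PiM_component unif01_prob) auto
  have mj: "(\<lambda>x. x j) \<in> measurable (Xdist p) unif01"
    unfolding Xdist_def using jp by auto
  have fm: "f \<in> borel_measurable unif01" using f by (simp add: measurable_cong_sets[OF sets_unif01 refl])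
  show "integrable (Xdist p) (\<lambda>x. f (x j)) \<longleftrightarrow> integrable unif01 f"
    using integrable_distr_eq[OF mj fm] D by simp
  show "(\<integral>x. f (x j) \<partial>Xdist p) = (\<integral>t. f t \<partial>unif01)"
    using integral_distr[OF mj fm] D by simp
qed

lemma Ob_prob: "prob_space Ob"
  unfolding obs_dist_def using Xdist_prob mu_prob by (intro prob_space_pair) auto

lemma ob:
  fixes \<phi> h :: "real \<Rightarrow> real"
  assumes c: "continuous_on UNIV \<phi>" and h: "integrable \<mu> h"
  shows "integrable Ob (\<lambda>w. \<phi> (g (fst w j)) * h (snd w))"
    and "(\<integral>w. \<phi> (g (fst w j)) * h (snd w) \<partial>Ob) = (\<integral>t. \<phi> (g t) \<partial>unif01) * (\<integral>e. h e \<partial>\<mu>)"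
proof -
  have [measurable]: "\<phi> \<in> borel_measurable borel" using c by (rule borel_measurable_continuous_onI)
  have X: "integrable (Xdist p) (\<lambda>x. \<phi> (g (x j)))"
    using Xdist_comp(1)[of "\<lambda>t. \<phi> (g t)"] unif_int[OF c] by simp
  show "integrable Ob (\<lambda>w. \<phi> (g (fst w j)) * h (snd w))"
    unfolding obs_dist_def using pair_int(1)[OF Xdist_prob mu_prob X h] .
  show "(\<integral>w. \<phi> (g (fst w j)) * h (snd w) \<partial>Ob) = (\<integral>t. \<phi> (g t) \<partial>unif01) * (\<integral>e. h e \<partial>\<mu>)"
    unfolding obs_dist_def using pair_int(2)[OF Xdist_prob mu_prob X h] Xdist_comp(2)[of "\<lambda>t. \<phi> (g t)"] by simp
qed

lemma mu_int1: "integrable \<mu> (\<lambda>e. 1)"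
proof -
  interpret prob_space \<mu> by (rule mu_prob)
  show ?thesis by simp
qed

lemma mu_int_sq: "integrable \<mu> (\<lambda>e. e\<^sup>2)"
proof (rule Bochner_Integration.integrable_bound[OF Bochner_Integration.integrable_add[OF mu_int1 int4]])
  show "(\<lambda>e. e\<^sup>2) \<in> borel_measurable \<mu>" unfolding measurable_cong_sets[OF sets_mu refl] by simp
  show "AE x in \<mu>. norm (x\<^sup>2) \<le> norm (1 + x ^ 4)"
  proof (rule AE_I2)
    fix x :: real
    have 0: "0 \<le> (x\<^sup>2 - 1)\<^sup>2" by simp
    have 1: "(x\<^sup>2 - 1)\<^sup>2 = x^4 - 2 * x\<^sup>2 + 1" by (simp add: power2_eq_square power4_eq_xxxx algebra_simps)
    have 2: "0 \<le> x\<^sup>2" by simp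
    have 3: "0 \<le> x^4" by (simp add: zero_le_even_power)
    have "x\<^sup>2 \<le> 1 + x^4" using 0 1 2 by linarith
    then show "norm (x\<^sup>2) \<le> norm (1 + x ^ 4)" using 2 3 by simp
  qed
qed

lemma mu_int_id: "integrable \<mu> (\<lambda>e. e)"
proof (rule Bochner_Integration.integrable_bound[OF Bochner_Integration.integrable_add[OF mu_int1 mu_int_sq]])
  show "(\<lambda>e. e) \<in> borel_measurable \<mu>" unfolding measurable_cong_sets[OF sets_mu refl] by simp
  show "AE x in \<mu>. norm x \<le> norm (1 + x\<^sup>2)"
  proof (rule AE_I2)
    fix x :: real
    have "\<bar>x\<bar> \<le> 1 + x\<^sup>2"
    proof (cases "\<bar>x\<bar> \<le> 1")
      case True then show ?thesis by (simp add: add_increasing2)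
    next
      case False
      then have "\<bar>x\<bar> * 1 \<le> \<bar>x\<bar> * \<bar>x\<bar>" by (intro mult_left_mono) auto
      then show ?thesis by (simp add: power2_eq_square)
    qed
    then show "norm x \<le> norm (1 + x\<^sup>2)" by simp
  qed
qed

end



sublocale S \<subseteq> mu: prob_space \<mu> by (rule mu_prob)
sublocale S \<subseteq> ob: prob_space "obs_dist p \<mu>" by (rule Ob_prob)

context S begin

definition GG :: "(nat \<Rightarrow> real) \<times> real \<Rightarrow> real" where "GG w = g (fst w j)"
definition TT :: "(nat \<Rightarrow> real) \<times> real \<Rightarrow> (nat \<Rightarrow> real) \<times> real \<Rightarrow> real" where
  "TT u v = (GG u - GG v)\<^sup>2 - 2 * snd v * (GG u - GG v)"
definition "s1 = (\<integral>t. g t \<partial>unif01)"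
definition "s2 = (\<integral>t. (g t)\<^sup>2 \<partial>unif01)"

lemma hker_eq: "hker m p j N zs \<pi> = (1 / real N) * (\<Sum>i<N. TT (zs (\<pi> i)) (zs i))"
  unfolding hker_def Let_def
  by (intro arg_cong[where f="\<lambda>x. _ * x"] sum.cong refl)
     (simp add: mtilde_upd TT_def GG_def power2_eq_square algebra_simps)

lemma iG: "integrable Ob GG" and eG: "(\<integral>w. GG w \<partial>Ob) = s1"
  using ob[of "\<lambda>x. x" "\<lambda>_. 1"] mu_int1 continuous_on_id
  by (auto simp: GG_def[abs_def] s1_def mu.prob_space)

lemma iG2: "integrable Ob (\<lambda>w. (GG w)\<^sup>2)" and eG2: "(\<integral>w. (GG w)\<^sup>2 \<partial>Ob) = s2"
  using ob[of "\<lambda>x. x\<^sup>2" "\<lambda>_. 1", OF continuous_on_power[OF continuous_on_id] mu_int1]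
  by (auto simp: GG_def s2_def mu.prob_space)

lemma iE: "integrable Ob (\<lambda>w. snd w)" and eE: "(\<integral>w. snd w \<partial>Ob) = 0"
  using ob[of "\<lambda>x. 1" "\<lambda>e. e"] mu_int_id mean0
  by (auto simp: GG_def)

lemma iEG: "integrable Ob (\<lambda>w. snd w * GG w)" and eEG: "(\<integral>w. snd w * GG w \<partial>Ob) = 0"
  using ob[of "\<lambda>x. x" "\<lambda>e. e"] mu_int_id mean0 continuous_on_id
  by (auto simp: GG_def mult.commute)

lemma i1: "integrable Ob (\<lambda>w. 1::real)" by simp
lemma e1: "(\<integral>w. (1::real) \<partial>Ob) = 1" by (simp add: ob.prob_space)

definition "FF z = s2 - 2 * (GG z + snd z) * s1 + (GG z)\<^sup>2 + 2 * snd z * GG z"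
definition "GF z = (GG z)\<^sup>2 - 2 * GG z * s1 + s2"

lemma TT_left: "integrable Ob (\<lambda>w. TT w z)" "(\<integral>w. TT w z \<partial>Ob) = FF z"
proof -
  have eq: "(\<lambda>w. TT w z) = (\<lambda>w. (GG w)\<^sup>2 - (2 * (GG z + snd z)) * GG w + ((GG z)\<^sup>2 + 2 * snd z * GG z))"
    by (rule ext) (simp add: TT_def power2_eq_square algebra_simps)
  show "integrable Ob (\<lambda>w. TT w z)" unfolding eq using iG iG2 by auto
  show "(\<integral>w. TT w z \<partial>Ob) = FF z" unfolding eq using iG iG2 eG eG2
    by (simp add: ob.prob_space FF_def)
qed

lemma TT_right: "integrable Ob (\<lambda>w. TT z w)" "(\<integral>w. TT z w \<partial>Ob) = GF z"
proof -
  have eq: "(\<lambda>w. TT z w) = (\<lambda>w. ((GG z)\<^sup>2 - (2 * GG z) * GG w + (GG w)\<^sup>2) - (2 * GG z) * snd w + 2 * (snd w * GG w))"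
    by (rule ext) (simp add: TT_def power2_eq_square algebra_simps)
  show "integrable Ob (\<lambda>w. TT z w)" unfolding eq using iG iG2 iE iEG by auto
  show "(\<integral>w. TT z w \<partial>Ob) = GF z" unfolding eq using iG iG2 eG eG2 iE iEG eE eEG
    by (simp add: ob.prob_space GF_def)
qed


abbreviation "MM N \<equiv> PiM {..<N} (\<lambda>_. Ob)"

lemma TT2:
  assumes "a < (N::nat)" "b < N" "a \<noteq> b"
  shows "integrable (MM N) (\<lambda>\<omega>. TT (\<omega> a) (\<omega> b))"
proof -
  have eq: "(\<lambda>\<omega>. TT (\<omega> a) (\<omega> b)) = (\<lambda>\<omega>. (GG (\<omega> a))\<^sup>2 * 1 + 1 * ((GG (\<omega> b))\<^sup>2 + 2 * (snd (\<omega> b) * GG (\<omega> b)))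
     - 2 * (GG (\<omega> a) * GG (\<omega> b)) - 2 * (GG (\<omega> a) * snd (\<omega> b)))"
    by (rule ext) (simp add: TT_def power2_eq_square algebra_simps)
  have h1: "integrable (MM N) (\<lambda>\<omega>. (GG (\<omega> a))\<^sup>2 * 1)"
    by (rule pi2(1)[OF Ob_prob assms iG2 i1])
  have h2: "integrable (MM N) (\<lambda>\<omega>. 1 * ((GG (\<omega> b))\<^sup>2 + 2 * (snd (\<omega> b) * GG (\<omega> b))))"
    by (rule pi2(1)[OF Ob_prob assms i1]) (use iG2 iEG in auto)
  have h3: "integrable (MM N) (\<lambda>\<omega>. GG (\<omega> a) * GG (\<omega> b))"
    by (rule pi2(1)[OF Ob_prob assms iG iG])
  have h4: "integrable (MM N) (\<lambda>\<omega>. GG (\<omega> a) * snd (\<omega> b))"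
    by (rule pi2(1)[OF Ob_prob assms iG iE])
  show ?thesis unfolding eq
    using Bochner_Integration.integrable_diff[OF Bochner_Integration.integrable_diff[OF
      Bochner_Integration.integrable_add[OF h1 h2] integrable_mult_right[OF h3]] integrable_mult_right[OF h4]]
    by simp
qed

lemma TTl_pi:
  assumes "a < (N::nat)"
  shows "integrable (MM N) (\<lambda>\<omega>. TT (\<omega> a) z)" "(\<integral>\<omega>. TT (\<omega> a) z \<partial>MM N) = FF z"
  using pi1[OF Ob_prob assms TT_left(1)] TT_left(2) by auto

lemma TTr_pi:
  assumes "a < (N::nat)"
  shows "integrable (MM N) (\<lambda>\<omega>. TT z (\<omega> a))" "(\<integral>\<omega>. TT z (\<omega> a) \<partial>MM N) = GF z"
  using pi1[OF Ob_prob assms TT_right(1)] TT_right(2) by auto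

lemma der:
  assumes "\<pi> \<in> derangements N"
  shows "\<pi> permutes {..<N}" "\<And>i. i < N \<Longrightarrow> \<pi> i \<noteq> i" "\<And>i. i < N \<Longrightarrow> \<pi> i < N"
  using assms permutes_in_image[of \<pi> "{..<N}"] by (auto simp: derangements_def)

lemma int_term:
  assumes d: "\<pi> \<in> derangements N" and i: "i < N"
  shows "integrable (MM N) (\<lambda>zs. TT ((zs(0:=z)) (\<pi> i)) ((zs(0:=z)) i))"
    and "(\<integral>zs. TT ((zs(0:=z)) (\<pi> i)) ((zs(0:=z)) i) \<partial>MM N) =
          (if i = 0 then FF z else if \<pi> i = 0 then GF z else (\<integral>zs. TT (zs (\<pi> i)) (zs i) \<partial>MM N))"
proof -
  have pi: "\<pi> i < N" "\<pi> i \<noteq> i" using der[OF d] i by auto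
  have "integrable (MM N) (\<lambda>zs. TT ((zs(0:=z)) (\<pi> i)) ((zs(0:=z)) i)) \<and>
     (\<integral>zs. TT ((zs(0:=z)) (\<pi> i)) ((zs(0:=z)) i) \<partial>MM N) =
          (if i = 0 then FF z else if \<pi> i = 0 then GF z else (\<integral>zs. TT (zs (\<pi> i)) (zs i) \<partial>MM N))"
  proof (cases "i = 0")
    case True
    then show ?thesis using pi TTl_pi[of "\<pi> i" N z] by simp
  next
    case False
    show ?thesis
    proof (cases "\<pi> i = 0")
      case True
      then show ?thesis using False i TTr_pi[of i N z] by simp
    next
      case F2: False
      then show ?thesis using False i pi TT2[of "\<pi> i" N i] by simp
    qed
  qed
  then show "integrable (MM N) (\<lambda>zs. TT ((zs(0:=z)) (\<pi> i)) ((zs(0:=z)) i))"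
    and "(\<integral>zs. TT ((zs(0:=z)) (\<pi> i)) ((zs(0:=z)) i) \<partial>MM N) =
          (if i = 0 then FF z else if \<pi> i = 0 then GF z else (\<integral>zs. TT (zs (\<pi> i)) (zs i) \<partial>MM N))"
    by auto
qed

lemma sum_split:
  fixes A B :: real
  assumes p: "\<pi> permutes {..<(N::nat)}" and d: "\<And>i. i < N \<Longrightarrow> \<pi> i \<noteq> i" and N: "0 < N"
  shows "(\<Sum>i<N. (if i = 0 then A else if \<pi> i = 0 then B else r i)) =
         A + B + (\<Sum>i<N. (if i \<noteq> 0 \<and> \<pi> i \<noteq> 0 then r i else 0))"
proof -
  define i0 where "i0 = inv \<pi> 0"
  have pi0: "\<pi> i0 = 0" unfolding i0_def using permutes_inverses(1)[OF p] by simp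
  have i0N: "i0 < N" unfolding i0_def using permutes_in_image[OF permutes_inv[OF p]] N by simp
  have i00: "i0 \<noteq> 0" using pi0 d[OF N] by (metis)
  have iff: "\<pi> i = 0 \<longleftrightarrow> i = i0" for i
    using pi0 permutes_inverses(2)[OF p, of i] unfolding i0_def by metis
  have "(\<Sum>i<N. (if i = 0 then A else if \<pi> i = 0 then B else r i)) =
     (\<Sum>i<N. (if i = 0 then A else 0) + (if i = i0 then B else 0) + (if i \<noteq> 0 \<and> \<pi> i \<noteq> 0 then r i else 0))"
    by (intro sum.cong refl) (use i00 iff in auto)
  also have "\<dots> = A + B + (\<Sum>i<N. (if i \<noteq> 0 \<and> \<pi> i \<noteq> 0 then r i else 0))"
    using N i0N by (simp add: sum.distrib sum.delta)
  finally show ?thesis .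
qed

definition "R N \<pi> = (\<Sum>i<N. (if i \<noteq> 0 \<and> \<pi> i \<noteq> 0 then (\<integral>zs. TT (zs (\<pi> i)) (zs i) \<partial>MM N) else 0))"

lemma hker_int:
  assumes d: "\<pi> \<in> derangements N" and N: "0 < N"
  shows "integrable (MM N) (\<lambda>zs. hker m p j N (zs(0:=z)) \<pi>)"
    and "(\<integral>zs. hker m p j N (zs(0:=z)) \<pi> \<partial>MM N) = (1 / real N) * (FF z + GF z + R N \<pi>)"
proof -
  have eq: "(\<lambda>zs. hker m p j N (zs(0:=z)) \<pi>) = (\<lambda>zs. (1 / real N) * (\<Sum>i<N. TT ((zs(0:=z)) (\<pi> i)) ((zs(0:=z)) i)))"
    by (rule ext) (rule hker_eq)
  show "integrable (MM N) (\<lambda>zs. hker m p j N (zs(0:=z)) \<pi>)" unfolding eq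
    using int_term(1)[OF d] by (intro integrable_mult_right Bochner_Integration.integrable_sum) auto
  have "(\<integral>zs. hker m p j N (zs(0:=z)) \<pi> \<partial>MM N) =
      (1 / real N) * (\<Sum>i<N. (\<integral>zs. TT ((zs(0:=z)) (\<pi> i)) ((zs(0:=z)) i) \<partial>MM N))"
  proof -
    have "(\<integral>zs. (\<Sum>i<N. TT ((zs(0:=z)) (\<pi> i)) ((zs(0:=z)) i)) \<partial>MM N) =
      (\<Sum>i<N. (\<integral>zs. TT ((zs(0:=z)) (\<pi> i)) ((zs(0:=z)) i) \<partial>MM N))"
      by (rule Bochner_Integration.integral_sum) (rule int_term(1)[OF d], simp)
    then show ?thesis unfolding eq by simp
  qed
  also have "\<dots> = (1 / real N) * (\<Sum>i<N. (if i = 0 then FF z else if \<pi> i = 0 then GF z else (\<integral>zs. TT (zs (\<pi> i)) (zs i) \<partial>MM N)))"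
    using int_term(2)[OF d] by simp
  also have "\<dots> = (1 / real N) * (FF z + GF z + R N \<pi>)"
    unfolding R_def by (subst sum_split[OF der(1,2)[OF d] N]) auto
  finally show "(\<integral>zs. hker m p j N (zs(0:=z)) \<pi> \<partial>MM N) = (1 / real N) * (FF z + GF z + R N \<pi>)" .
qed

end



lemma der_ex:
  assumes N: "2 \<le> (N::nat)"
  shows "derangements N \<noteq> {}" "finite (derangements N)"
proof -
  define \<sigma> where "\<sigma> i = (if i < N then (if Suc i < N then Suc i else 0) else i)" for i
  have img: "\<sigma> ` {..<N} \<subseteq> {..<N}" using N by (auto simp: \<sigma>_def)
  have inj: "inj_on \<sigma> {..<N}"
    by (auto simp: inj_on_def \<sigma>_def split: if_splits)
  have "\<sigma> ` {..<N} = {..<N}" by (rule endo_inj_surj[OF _ img inj]) simp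
  then have "bij_betw \<sigma> {..<N} {..<N}" using inj by (simp add: bij_betw_def)
  then have "\<sigma> permutes {..<N}" by (rule bij_imp_permutes) (simp add: \<sigma>_def)
  moreover have "\<forall>i<N. \<sigma> i \<noteq> i" using N by (auto simp: \<sigma>_def)
  ultimately have "\<sigma> \<in> derangements N" by (simp add: derangements_def)
  then show "derangements N \<noteq> {}" by blast
  show "finite (derangements N)"
    by (rule finite_subset[OF _ finite_permutations[of "{..<N}"]]) (auto simp: derangements_def)
qed

context S begin

lemma condexp_eq:
  assumes N: "2 \<le> N"
  shows "condexp1 m p j \<mu> N z = (FF z + GF z) / real N
     + (\<Sum>\<pi>\<in>derangements N. R N \<pi>) / (real N * real (card (derangements N)))"
proof -
  let ?D = "derangements N"
  have fin: "finite ?D" and ne: "?D \<noteq> {}" using der_ex[OF N] by auto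
  have cD: "0 < card ?D" using fin ne by (simp add: card_gt_0_iff)
  have N0: "0 < N" using N by simp
  have "condexp1 m p j \<mu> N z = (\<integral>zs. (\<Sum>\<pi>\<in>?D. hker m p j N (zs(0 := z)) \<pi>) / real (card ?D) \<partial>MM N)"
    unfolding condexp1_def hbar_def ..
  also have "\<dots> = (\<integral>zs. (\<Sum>\<pi>\<in>?D. hker m p j N (zs(0 := z)) \<pi>) \<partial>MM N) / real (card ?D)"
    by simp
  also have "(\<integral>zs. (\<Sum>\<pi>\<in>?D. hker m p j N (zs(0 := z)) \<pi>) \<partial>MM N) = (\<Sum>\<pi>\<in>?D. (\<integral>zs. hker m p j N (zs(0 := z)) \<pi> \<partial>MM N))"
    by (rule Bochner_Integration.integral_sum) (rule hker_int(1)[OF _ N0], simp)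
  also have "\<dots> = (\<Sum>\<pi>\<in>?D. (1 / real N) * (FF z + GF z + R N \<pi>))"
    by (intro sum.cong refl hker_int(2)[OF _ N0])
  also have "\<dots> = real (card ?D) * ((FF z + GF z) / real N) + (\<Sum>\<pi>\<in>?D. R N \<pi>) / real N"
    by (simp add: sum.distrib sum_divide_distrib[symmetric] algebra_simps add_divide_distrib)
  finally show ?thesis using cD N0 by (simp add: field_simps)
qed

definition "HH z = 2 * (GG z - s1)\<^sup>2 + 2 * snd z * (GG z - s1)"
definition "vv = (\<integral>t. (g t - s1)\<^sup>2 \<partial>unif01)"
definition "VV = (\<integral>z. (HH z - (\<integral>w. HH w \<partial>Ob))\<^sup>2 \<partial>Ob)"

lemma FG_HH: "FF z + GF z = HH z + (2 * s2 - 2 * s1\<^sup>2)"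
  by (simp add: FF_def GF_def HH_def power2_eq_square algebra_simps)

lemma HH_int: "integrable Ob HH" "(\<integral>w. HH w \<partial>Ob) = 2 * vv"
proof -
  have c1: "continuous_on UNIV (\<lambda>x::real. (x - s1)\<^sup>2)" by (intro continuous_intros)
  have c2: "continuous_on UNIV (\<lambda>x::real. x - s1)" by (intro continuous_intros)
  note o1 = ob[OF c1 mu_int1] and o2 = ob[OF c2 mu_int_id]
  have eq: "HH = (\<lambda>w. 2 * ((g (fst w j) - s1)\<^sup>2 * 1) + 2 * ((g (fst w j) - s1) * snd w))"
    by (rule ext) (simp add: HH_def GG_def)
  show "integrable Ob HH" unfolding eq using o1(1) o2(1) by simp
  show "(\<integral>w. HH w \<partial>Ob) = 2 * vv" unfolding eq using o1 o2 mean0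
    by (simp add: mu.prob_space vv_def)
qed

lemma zeta_eq:
  assumes N: "2 \<le> N"
  shows "(real N)\<^sup>2 * zeta1 m p j \<mu> N = VV"
proof -
  define C where "C = (2 * s2 - 2 * s1\<^sup>2) / real N
     + (\<Sum>\<pi>\<in>derangements N. R N \<pi>) / (real N * real (card (derangements N)))"
  have N0: "0 < real N" using N by simp
  have ce: "(\<lambda>z. condexp1 m p j \<mu> N z) = (\<lambda>z. HH z / real N + C)"
    by (rule ext) (simp add: condexp_eq[OF N] FG_HH C_def add_divide_distrib)
  have I: "(\<integral>z. condexp1 m p j \<mu> N z \<partial>Ob) = (\<integral>w. HH w \<partial>Ob) / real N + C"
    unfolding ce using HH_int(1) by (simp add: ob.prob_space)
  have "zeta1 m p j \<mu> N = (\<integral>z. (HH z - (\<integral>w. HH w \<partial>Ob))\<^sup>2 / (real N)\<^sup>2 \<partial>Ob)"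
    unfolding zeta1_def I
    by (rule Bochner_Integration.integral_cong[OF refl]) (use N0 in \<open>simp add: ce field_simps power2_eq_square\<close>)
  also have "\<dots> = VV / (real N)\<^sup>2" unfolding VV_def by simp
  finally show ?thesis using N0 by simp
qed

end


context S begin
lemma VV_pos:
  assumes e2: "(\<integral>e. e\<^sup>2 \<partial>\<mu>) > 0" and v: "vv > 0"
  shows "VV > 0"
proof -
  have c1: "continuous_on UNIV (\<lambda>x::real. ((x - s1)\<^sup>2 - vv)\<^sup>2)" by (intro continuous_intros)
  have c2: "continuous_on UNIV (\<lambda>x::real. ((x - s1)\<^sup>2 - vv) * (x - s1))" by (intro continuous_intros)
  have c3: "continuous_on UNIV (\<lambda>x::real. (x - s1)\<^sup>2)" by (intro continuous_intros)
  note o1 = ob[OF c1 mu_int1] and o2 = ob[OF c2 mu_int_id] and o3 = ob[OF c3 mu_int_sq]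
  have eq: "(\<lambda>z. (HH z - (\<integral>w. HH w \<partial>Ob))\<^sup>2) = (\<lambda>w. 4 * (((g (fst w j) - s1)\<^sup>2 - vv)\<^sup>2 * 1)
     + 8 * ((((g (fst w j) - s1)\<^sup>2 - vv) * (g (fst w j) - s1)) * snd w)
     + 4 * ((g (fst w j) - s1)\<^sup>2 * (snd w)\<^sup>2))"
  proof (rule ext)
    fix w :: "(nat \<Rightarrow> real) \<times> real"
    define a where "a = g (fst w j) - s1"
    define e where "e = snd w"
    have sq: "\<And>X a e::real. (2*X + 2*(e*a))\<^sup>2 = 4*(X\<^sup>2*1) + 8*((X*a)*e) + 4*(a\<^sup>2*e\<^sup>2)"
      by (simp add: power2_eq_square algebra_simps)
    have "HH w - (\<integral>w. HH w \<partial>Ob) = 2 * (a\<^sup>2 - vv) + 2 * (e * a)"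
      unfolding HH_int(2) by (simp add: HH_def GG_def a_def e_def algebra_simps)
    then show "(HH w - (\<integral>w. HH w \<partial>Ob))\<^sup>2 = 4 * (((g (fst w j) - s1)\<^sup>2 - vv)\<^sup>2 * 1)
     + 8 * ((((g (fst w j) - s1)\<^sup>2 - vv) * (g (fst w j) - s1)) * snd w)
     + 4 * ((g (fst w j) - s1)\<^sup>2 * (snd w)\<^sup>2)"
      unfolding a_def[symmetric] e_def[symmetric] by (simp only: sq)
  qed
  have iA: "integrable Ob (\<lambda>w. 4 * (((g (fst w j) - s1)\<^sup>2 - vv)\<^sup>2 * 1))"
    using o1(1) by (rule integrable_mult_right)
  have iB: "integrable Ob (\<lambda>w. 8 * ((((g (fst w j) - s1)\<^sup>2 - vv) * (g (fst w j) - s1)) * snd w))"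
    using o2(1) by (rule integrable_mult_right)
  have iC: "integrable Ob (\<lambda>w. 4 * ((g (fst w j) - s1)\<^sup>2 * (snd w)\<^sup>2))"
    using o3(1) by (rule integrable_mult_right)
  have "VV = (\<integral>w. 4 * (((g (fst w j) - s1)\<^sup>2 - vv)\<^sup>2 * 1) \<partial>Ob)
      + (\<integral>w. 8 * ((((g (fst w j) - s1)\<^sup>2 - vv) * (g (fst w j) - s1)) * snd w) \<partial>Ob)
      + (\<integral>w. 4 * ((g (fst w j) - s1)\<^sup>2 * (snd w)\<^sup>2) \<partial>Ob)"
    unfolding VV_def eq
    by (simp only: Bochner_Integration.integral_add[OF Bochner_Integration.integrable_add[OF iA iB] iC]
         Bochner_Integration.integral_add[OF iA iB])
  also have "\<dots> = 4 * (\<integral>t. ((g t - s1)\<^sup>2 - vv)\<^sup>2 \<partial>unif01) + 4 * (vv * (\<integral>e. e\<^sup>2 \<partial>\<mu>))"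
  proof -
    have a1: "(\<integral>w. 4 * (((g (fst w j) - s1)\<^sup>2 - vv)\<^sup>2 * 1) \<partial>Ob) = 4 * (\<integral>t. ((g t - s1)\<^sup>2 - vv)\<^sup>2 \<partial>unif01)"
      unfolding integral_mult_right_zero o1(2) by (simp add: mu.prob_space)
    have a2: "(\<integral>w. 8 * ((((g (fst w j) - s1)\<^sup>2 - vv) * (g (fst w j) - s1)) * snd w) \<partial>Ob) = 0"
      unfolding integral_mult_right_zero o2(2) mean0 by simp
    have a3: "(\<integral>w. 4 * ((g (fst w j) - s1)\<^sup>2 * (snd w)\<^sup>2) \<partial>Ob) = 4 * (vv * (\<integral>e. e\<^sup>2 \<partial>\<mu>))"
      unfolding integral_mult_right_zero o3(2) vv_def ..
    show ?thesis unfolding a1 a2 a3 by simp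
  qed
  finally have "VV = 4 * (\<integral>t. ((g t - s1)\<^sup>2 - vv)\<^sup>2 \<partial>unif01) + 4 * (vv * (\<integral>e. e\<^sup>2 \<partial>\<mu>))" .
  moreover have "0 \<le> (\<integral>t. ((g t - s1)\<^sup>2 - vv)\<^sup>2 \<partial>unif01)" by simp
  moreover have "0 < vv * (\<integral>e. e\<^sup>2 \<partial>\<mu>)" using e2 v by simp
  ultimately show ?thesis by linarith
qed

end

theorem lemma1:
  fixes p j :: nat and m :: "nat \<Rightarrow> real \<Rightarrow> real" and K :: real
    and \<mu> :: "real measure" and \<gamma> :: "nat \<Rightarrow> nat"
  assumes "j < p"
    and "\<And>l. l < p \<Longrightarrow> m l \<in> borel_measurable borel"
    and "K > 0"
    and "\<forall>x\<in>PiE {..<p} (\<lambda>_. {0..1}). \<bar>mtilde m p x\<bar> \<le> K"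
    and "prob_space \<mu>" and "sets \<mu> = sets borel"
    and "integrable \<mu> (\<lambda>e. e ^ 4)"
    and "(\<integral>e. e \<partial>\<mu>) = 0"
    and "(\<integral>e. e\<^sup>2 \<partial>\<mu>) > 0"
    and "(\<integral>t. (m j t - (\<integral>s. m j s \<partial>unif01))\<^sup>2 \<partial>unif01) > 0"
    and "\<And>n. \<gamma> n \<ge> 2"
    and "filterlim \<gamma> at_top sequentially"
  shows "\<exists>\<zeta>>0. (\<lambda>n. (real (\<gamma> n))\<^sup>2 * zeta1 m p j \<mu> (\<gamma> n)) \<longlonglongrightarrow> \<zeta>"
proof -
  interpret S m p j K \<mu>
    by (intro S.intro) (fact assms)+
  have vv: "vv > 0" using assms(10) unfolding vv_def s1_def .
  have pos: "VV > 0" by (rule VV_pos[OF assms(9) vv])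
  have eq: "(\<lambda>n. (real (\<gamma> n))\<^sup>2 * zeta1 m p j \<mu> (\<gamma> n)) = (\<lambda>n. VV)"
    by (rule ext) (rule zeta_eq[OF assms(11)])
  show ?thesis unfolding eq using pos by (intro exI[of _ VV] conjI tendsto_const)
qed


end
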